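(* Let $f:\mathbb{Z}^n\to\mathbb{R}\cup\{+\infty\}$ be an M-convex function. Let $y\in\operatorname{dom} f$ with $\phi(y)<0$, and let $i,j\in N$ be distinct with $f'(y;i,j)=\phi(y)$. Then $\phi(y+\chi_i-\chi_j)\ge\phi(y)$. Moreover, for all distinct $h,k\in N$ we have $f'(y+\chi_i-\chi_j;h,k)\ge\phi(y)$, and if equality holds then $f'(y+\chi_i-\chi_j;h,k)=\phi(y+\chi_i-\chi_j)$, i.e. $+\chi_h-\chi_k$ is a steepest descent direction at $y+\chi_i-\chi_j$.
   Context: $N=\{1,\dots,n\}$; $\chi_i\in\{0,1\}^n$ is the $i$-th unit vector. For $f:\mathbb{Z}^n\to\mathbb{R}\cup\{+\infty\}$, $\operatorname{dom} f=\{x\in\mathbb{Z}^n: f(x)<+\infty\}$. $f$ is M-convex if $\operatorname{dom} f\neq\emptyset$ and for all $x,y\in\operatorname{dom} f$ and every $i$ with $x(i)>y(i)$ there is $j$ with $x(j)<y(j)$ such that $f(x)+f(y)\ge f(x-\chi_i+\chi_j)+f(y+\chi_i-\chi_j)$. For $x\in\operatorname{dom} f$ and $i,j\in N$, $f'(x;i,j)=f(x+\chi_i-\chi_j)-f(x)$ (possibly $+\infty$; $f'(x;i,i)=0$), and $\phi(x)=\min_{i,j\in N}f'(x;i,j)$. A direction $+\chi_h-\chi_k$ is a steepest descent direction at $x$ if $f'(x;h,k)=\phi(x)$. *)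

theory Defs
  imports "HOL-Library.Extended_Real"
begin

text \<open>Ground set N is modelled by a finite type 'a; points of Z^N are functions 'a => int.
  Values in R \<union> {+\<infinity>} are modelled by ereal (never -\<infinity>, assumed separately).\<close>

definition chi :: "'a \<Rightarrow> 'a \<Rightarrow> int" where
  "chi i = (\<lambda>k. if k = i then 1 else 0)"

definition mdom :: "(('a \<Rightarrow> int) \<Rightarrow> ereal) \<Rightarrow> ('a \<Rightarrow> int) set" where
  "mdom f = {x. f x < \<infinity>}"

definition M_convex :: "(('a \<Rightarrow> int) \<Rightarrow> ereal) \<Rightarrow> bool" where
  "M_convex f \<longleftrightarrow> mdom f \<noteq> {} \<and>
     (\<forall>x\<in>mdom f. \<forall>y\<in>mdom f. \<forall>i. x i > y i \<longrightarrow>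
        (\<exists>j. x j < y j \<and>
           f x + f y \<ge> f (\<lambda>k. x k - chi i k + chi j k) + f (\<lambda>k. y k + chi i k - chi j k)))"

definition fder :: "(('a \<Rightarrow> int) \<Rightarrow> ereal) \<Rightarrow> ('a \<Rightarrow> int) \<Rightarrow> 'a \<Rightarrow> 'a \<Rightarrow> ereal" where
  "fder f x i j = f (\<lambda>k. x k + chi i k - chi j k) - f x"

definition phi :: "(('a::finite \<Rightarrow> int) \<Rightarrow> ereal) \<Rightarrow> ('a \<Rightarrow> int) \<Rightarrow> ereal" where
  "phi f x = Min {fder f x i j | i j. True}"

end

theory Submission
  imports Defs
begin

lemma phi_le:
  fixes f :: "('a::finite \<Rightarrow> int) \<Rightarrow> ereal"
  shows "phi f x \<le> fder f x p q"
  unfolding phi_def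
proof (rule Min_le)
  have "{fder f x i j | i j. True} = (\<lambda>(i,j). fder f x i j) ` UNIV" by auto
  then show "finite {fder f x i j | i j. True}" by simp
qed auto

lemma phi_ge:
  fixes f :: "('a::finite \<Rightarrow> int) \<Rightarrow> ereal"
  assumes "\<And>p q. c \<le> fder f x p q"
  shows "c \<le> phi f x"
  unfolding phi_def
proof -
  have e: "{fder f x i j | i j. True} = (\<lambda>(i,j). fder f x i j) ` UNIV" by auto
  show "c \<le> Min {fder f x i j | i j. True}"
    unfolding e by (subst Min_ge_iff) (use assms in auto)
qed

theorem mainTheorem1:
  fixes f :: "('a::finite \<Rightarrow> int) \<Rightarrow> ereal" and y :: "'a \<Rightarrow> int" and i j :: 'a
  assumes "M_convex f"
    and "\<forall>x. f x \<noteq> -\<infinity>"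
    and "y \<in> mdom f"
    and "phi f y < 0"
    and "i \<noteq> j"
    and "fder f y i j = phi f y"
  shows "phi f (\<lambda>k. y k + chi i k - chi j k) \<ge> phi f y \<and>
         (\<forall>h k. h \<noteq> k \<longrightarrow>
            fder f (\<lambda>l. y l + chi i l - chi j l) h k \<ge> phi f y \<and>
            (fder f (\<lambda>l. y l + chi i l - chi j l) h k = phi f y \<longrightarrow>
               fder f (\<lambda>l. y l + chi i l - chi j l) h k = phi f (\<lambda>l. y l + chi i l - chi j l)))"
proof -
  define x where "x = (\<lambda>l. y l + chi i l - chi j l)"
  obtain a where a: "f y = ereal a"
    using assms(2,3) unfolding mdom_def by (cases "f y") auto
  have fdy: "fder f y p q = f (\<lambda>l. y l + chi p l - chi q l) - ereal a" for p q
    unfolding fder_def a ..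
  obtain c where c: "phi f y = ereal c"
  proof -
    have "phi f y \<noteq> -\<infinity>"
    proof
      assume "phi f y = -\<infinity>"
      then have "fder f y i j = -\<infinity>" using assms(6) by simp
      then show False using assms(2) unfolding fdy
        by (cases "f (\<lambda>l. y l + chi i l - chi j l)") auto
    qed
    then show ?thesis using assms(4) that by (cases "phi f y") auto
  qed
  have cneg: "c < 0" using assms(4) c by simp
  have ge: "f (\<lambda>l. y l + chi p l - chi q l) \<ge> ereal (a + c)" for p q
  proof -
    have "ereal c \<le> fder f y p q" using phi_le[of f y p q] c by simp
    then show ?thesis unfolding fdy
      by (cases "f (\<lambda>l. y l + chi p l - chi q l)") auto
  qed
  have fx: "f x = ereal (a + c)"
    using assms(6) c unfolding fdy x_def
    by (cases "f (\<lambda>l. y l + chi i l - chi j l)") auto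
  have zge: "f (\<lambda>l. x l + chi h l - chi k l) \<ge> ereal (a + 2*c)" if hk: "h \<noteq> k" for h k
  proof -
    define z where "z = (\<lambda>l. x l + chi h l - chi k l)"
    show ?thesis
    proof (cases "h = j")
      case True
      have "z = (\<lambda>l. y l + chi i l - chi k l)"
        unfolding z_def x_def True by (auto simp: chi_def)
      then have "f z \<ge> ereal (a + c)" using ge by simp
      moreover have "ereal (a + c) \<ge> ereal (a + 2*c)" using cneg by simp
      ultimately show ?thesis unfolding z_def by (meson order_trans)
    next
      case hj: False
      show ?thesis
      proof (cases "k = i")
        case True
        have "z = (\<lambda>l. y l + chi h l - chi j l)"
          unfolding z_def x_def True by (auto simp: chi_def)
        then have "f z \<ge> ereal (a + c)" using ge by simp
        moreover have "ereal (a + c) \<ge> ereal (a + 2*c)" using cneg by simp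
        ultimately show ?thesis unfolding z_def by (meson order_trans)
      next
        case ki: False
        show ?thesis
        proof (cases "z \<in> mdom f")
          case False
          then have "f z = \<infinity>" unfolding mdom_def by auto
          then show ?thesis unfolding z_def by simp
        next
          case zdom: True
          have zi: "z i > y i" unfolding z_def x_def using assms(5) ki
            by (auto simp: chi_def)
          obtain j' where j': "z j' < y j'"
            and ex: "f z + f y \<ge> f (\<lambda>l. z l - chi i l + chi j' l) + f (\<lambda>l. y l + chi i l - chi j' l)"
            using assms(1) zdom assms(3) zi unfolding M_convex_def by blast
          have "j' = j \<or> j' = k"
            using j' unfolding z_def x_def by (auto simp: chi_def split: if_splits)
          then have t1: "f (\<lambda>l. z l - chi i l + chi j' l) \<ge> ereal (a + c)"
          proof
            assume "j' = j"
            then have "(\<lambda>l. z l - chi i l + chi j' l) = (\<lambda>l. y l + chi h l - chi k l)"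
              unfolding z_def x_def by (auto simp: chi_def)
            then show ?thesis using ge by simp
          next
            assume "j' = k"
            then have "(\<lambda>l. z l - chi i l + chi j' l) = (\<lambda>l. y l + chi h l - chi j l)"
              unfolding z_def x_def by (auto simp: chi_def)
            then show ?thesis using ge by simp
          qed
          have "ereal (a + c) + ereal (a + c) \<le> f z + ereal a"
            using order_trans[OF add_mono[OF t1 ge[of i j']] ex] a by simp
          then show ?thesis unfolding z_def[symmetric]
            by (cases "f z") auto
        qed
      qed
    qed
  qed
  have fxge: "fder f x h k \<ge> ereal c" for h k
  proof (cases "h = k")
    case True
    then show ?thesis unfolding fder_def using fx cneg by (simp add: chi_def)
  next
    case False
    then show ?thesis using zge[OF False] unfolding fder_def fx
      by (cases "f (\<lambda>l. x l + chi h l - chi k l)") auto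
  qed
  have phix: "phi f x \<ge> ereal c" by (rule phi_ge) (rule fxge)
  show ?thesis
    unfolding x_def[symmetric] c
    using phix fxge phi_le[of f x] by (metis antisym)
qed

end
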